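(* Let $m, s$ be positive integers with $n = \lfloor 2m/s \rfloor \ge 3$. Then $f(m,s) > 1/3$.
   Context: The muffin problem with $m$ muffins and $s$ students (positive integers) asks to cut each of $m$ muffins of size $1$ into finitely many pieces of positive size and to assign every piece to one of $s$ students so that each student receives pieces of total size $m/s$. $f(m,s)$ denotes the maximum, over all such divisions and assignments, of the size of the smallest piece. *)

theory Defs
  imports Complex_Main
begin

text \<open>A division/assignment for the muffin problem with m muffins and s students is
  represented as a finite list of pieces (i, j, x): a piece of muffin i (i < m),
  of size x > 0, given to student j (j < s).\<close>

definition muffin_procedure :: "nat \<Rightarrow> nat \<Rightarrow> (nat \<times> nat \<times> real) list \<Rightarrow> bool" where
  "muffin_procedure m s P \<longleftrightarrow>
     (\<forall>(i, j, x) \<in> set P. i < m \<and> j < s \<and> x > 0) \<and>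
     (\<forall>i < m. sum_list (map (\<lambda>(i', j, x). x) (filter (\<lambda>(i', j, x). i' = i) P)) = 1) \<and>
     (\<forall>j < s. sum_list (map (\<lambda>(i, j', x). x) (filter (\<lambda>(i, j', x). j' = j) P)) = real m / real s)"

definition smallest_piece :: "(nat \<times> nat \<times> real) list \<Rightarrow> real" where
  "smallest_piece P = Min ((\<lambda>(i, j, x). x) ` set P)"

definition muffin_f :: "nat \<Rightarrow> nat \<Rightarrow> real" where
  "muffin_f m s = Sup {smallest_piece P | P. muffin_procedure m s P}"

end

theory Submission
  imports Defs
begin


lemma exists_neg:
  fixes R :: "('a \<times> real) list"
  assumes "sum_list (map snd R) < 0"
  shows "\<exists>r\<in>set R. snd r < 0"
proof (rule ccontr)
  assume "\<not> ?thesis"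
  then have "0 \<le> sum_list (map snd R)" by (intro sum_list_nonneg) auto
  with assms show False by simp
qed

lemma exists_nonneg:
  fixes R :: "('a \<times> real) list"
  assumes "sum_list (map snd R) \<ge> 0" "R \<noteq> []"
  shows "\<exists>r\<in>set R. snd r \<ge> 0"
proof (rule ccontr)
  assume H: "\<not> ?thesis"
  obtain x R0 where R: "R = x # R0" using assms(2) by (cases R) auto
  have "sum_list (map snd R0) \<le> 0" using H R by (intro sum_list_nonpos) auto
  moreover have "snd x < 0" using H R by auto
  ultimately have "sum_list (map snd R) < 0" using R by simp
  with assms show False by simp
qed

lemma balance:
  fixes A B :: real and R :: "('a \<times> real) list"
  assumes AB: "A \<ge> 0" "B \<ge> 0"
  shows "S + sum_list (map snd R) = 0 \<Longrightarrow> (\<forall>r\<in>set R. -A \<le> snd r \<and> snd r \<le> B) \<Longrightarrow> -A \<le> S \<Longrightarrow> S \<le> B \<Longrightarrow>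
    \<exists>ys. length ys = length R \<and> set ys \<subseteq> set R \<and> (\<forall>f::('a \<times> real) \<Rightarrow> real. sum_list (map f ys) = sum_list (map f R)) \<and>
      (\<forall>k\<le>length ys. -A \<le> S + sum_list (take k (map snd ys)) \<and> S + sum_list (take k (map snd ys)) \<le> B)"
proof (induction "length R" arbitrary: R S rule: less_induct)
  case less
  show ?case
  proof (cases "R = []")
    case True
    then show ?thesis using less.prems by (intro exI[of _ "[]"]) auto
  next
    case False
    have "\<exists>r\<in>set R. -A \<le> S + snd r \<and> S + snd r \<le> B"
    proof (cases "S > 0")
      case True
      then have "sum_list (map snd R) < 0" using less.prems(1) by linarith
      then obtain r where r: "r \<in> set R" "snd r < 0" using exists_neg by blast
      then show ?thesis using less.prems True by (intro bexI[of _ r]) force+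
    next
      case F: False
      then have "sum_list (map snd R) \<ge> 0" using less.prems(1) by linarith
      then obtain r where r: "r \<in> set R" "snd r \<ge> 0" using exists_nonneg False by blast
      then show ?thesis using less.prems F by (intro bexI[of _ r]) force+
    qed
    then obtain r where r: "r \<in> set R" "-A \<le> S + snd r" "S + snd r \<le> B" by blast
    define R' where "R' = remove1 r R"
    have lenR': "length R' < length R" using r(1) unfolding R'_def
      by (simp add: length_remove1) (metis length_pos_if_in_set One_nat_def diff_less zero_less_one)
    have sumR': "\<And>f::('a \<times> real) \<Rightarrow> real. sum_list (map f R) = f r + sum_list (map f R')"
      unfolding R'_def using r(1) by (rule sum_list_map_remove1)
    have "(S + snd r) + sum_list (map snd R') = 0" using sumR'[of snd] less.prems(1) by simp
    moreover have "\<forall>x\<in>set R'. -A \<le> snd x \<and> snd x \<le> B" using less.prems(2) unfolding R'_def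
      by (meson notin_set_remove1)
    ultimately obtain ys' where ys': "length ys' = length R'" "set ys' \<subseteq> set R'"
      "\<forall>f::('a \<times> real) \<Rightarrow> real. sum_list (map f ys') = sum_list (map f R')"
      "\<forall>k\<le>length ys'. -A \<le> (S + snd r) + sum_list (take k (map snd ys')) \<and> (S + snd r) + sum_list (take k (map snd ys')) \<le> B"
      using less.hyps[OF lenR'] r by blast
    show ?thesis
    proof (intro exI[of _ "r # ys'"] conjI allI impI)
      show "length (r # ys') = length R" using ys'(1) r(1) unfolding R'_def
        by (simp add: length_remove1) (metis Suc_pred length_pos_if_in_set)
      show "set (r # ys') \<subseteq> set R" using ys'(2) r(1) unfolding R'_def
        using set_remove1_subset by fastforce
      fix f :: "('a \<times> real) \<Rightarrow> real"
      show "sum_list (map f (r # ys')) = sum_list (map f R)" using ys'(3) sumR'[of f] by simp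
    next
      fix k assume k: "k \<le> length (r # ys')"
      show "-A \<le> S + sum_list (take k (map snd (r # ys')))"
      proof (cases k)
        case 0 then show ?thesis using less.prems by simp
      next
        case (Suc k') then show ?thesis using ys'(4) k by (simp add: add.assoc)
      qed
      show "S + sum_list (take k (map snd (r # ys'))) \<le> B"
      proof (cases k)
        case 0 then show ?thesis using less.prems by simp
      next
        case (Suc k') then show ?thesis using ys'(4) k by (simp add: add.assoc)
      qed
    qed
  qed
qed



lemma sum_filter_concat:
  "sum_list (map f (filter Q (concat (map g xs)))) = sum_list (map (\<lambda>x. sum_list (map f (filter Q (g x)))) xs)"
  by (induction xs) auto

lemma sum_list_upt_sum: "sum_list (map f [0..<n]) = (\<Sum>k<n. f k)"
  by (simp add: interv_sum_list_conv_sum_set_nat atLeast0LessThan)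

lemma rotate_sum:
  fixes h :: "nat \<Rightarrow> real"
  assumes "V > 0"
  shows "(\<Sum>k<V. h (Suc k mod V)) = (\<Sum>k<V. h k)"
proof -
  obtain n where V: "V = Suc n" using assms by (cases V) auto
  have "(\<Sum>k<Suc n. h (Suc k mod Suc n)) = (\<Sum>k<n. h (Suc k mod Suc n)) + h (Suc n mod Suc n)"
    by simp
  also have "(\<Sum>k<n. h (Suc k mod Suc n)) = (\<Sum>k<n. h (Suc k))"
    by (intro sum.cong) auto
  also have "h (Suc n mod Suc n) = h 0" by simp
  also have "(\<Sum>k<n. h (Suc k)) + h 0 = (\<Sum>k<Suc n. h k)"
    by (subst sum.lessThan_Suc_shift) simp
  finally show ?thesis using V by simp
qed

lemma sum_map_concat:
  "sum_list (map f (concat (map h xs))) = sum_list (map (\<lambda>x. sum_list (map f (h x))) xs)"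
  by (induction xs) auto

lemma sum_list_concat_replicate:
  "sum_list (map f (concat (map (\<lambda>j. replicate (v j) (g j)) [0..<s]))) = (\<Sum>j<s. real (v j) * (f (g j) :: real))"
  by (simp add: sum_map_concat sum_list_upt_sum sum_list_replicate)

lemma E_total:
  fixes es :: "(nat \<times> nat \<times> real) list"
  assumes "\<forall>(a,b,p)\<in>set es. a < s \<and> b < s"
  shows "(\<Sum>j<s. sum_list (map (\<lambda>(a,b,p). (if a = j then p else 0) + (if b = j then 1 - p else 0)) es)) = real (length es)"
  using assms
proof (induction es)
  case Nil then show ?case by simp
next
  case (Cons e es)
  obtain a b p where e: "e = (a,b,p)" by (cases e) auto
  have ab: "a < s" "b < s" using Cons.prems e by auto
  have "(\<Sum>j<s. sum_list (map (\<lambda>(a,b,p). (if a = j then p else 0) + (if b = j then 1 - p else 0)) (e # es)))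
     = (\<Sum>j<s. (if a = j then p else 0) + (if b = j then 1 - p else 0)) + (\<Sum>j<s. sum_list (map (\<lambda>(a,b,p). (if a = j then p else 0) + (if b = j then 1 - p else 0)) es))"
    by (simp add: e sum.distrib)
  also have "(\<Sum>j<s. (if a = j then p else 0) + (if b = j then 1 - p else 0)) = 1"
    using ab by (simp add: sum.distrib)
  finally show ?case using Cons by simp
qed



lemma general:
  fixes m s :: nat and v :: "nat \<Rightarrow> nat" and es :: "(nat \<times> nat \<times> real) list" and A B :: real
  defines "d \<equiv> real m / real s"
  defines "E \<equiv> \<lambda>j. sum_list (map (\<lambda>(a,b,p). (if a = j then p else 0) + (if b = j then 1 - p else 0)) es)"
  assumes s0: "s > 0"
    and vpos: "\<forall>j<s. v j > 0"
    and cnt: "(\<Sum>j<s. v j) + length es = m"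
    and esok: "\<forall>(a,b,p)\<in>set es. a < s \<and> b < s \<and> 1/3 < p \<and> p < 2/3"
    and AB: "A \<ge> 0" "B \<ge> 0" "A + B < 1/3"
    and steps: "\<forall>j<s. -A \<le> (d - E j) / v j - 1 \<and> (d - E j) / v j - 1 \<le> B"
  shows "\<exists>P. muffin_procedure m s P \<and> (\<forall>(i,j,x)\<in>set P. x > 1/3) \<and> P \<noteq> []"
proof -
  define st where "st j = (d - E j) / real (v j) - 1" for j
  define xs0 where "xs0 = concat (map (\<lambda>j. replicate (v j) (j, st j)) [0..<s])"
  have xs0_set: "\<forall>x\<in>set xs0. fst x < s \<and> snd x = st (fst x)" unfolding xs0_def by auto
  have xs0_sum: "\<And>f. sum_list (map f xs0) = (\<Sum>j<s. real (v j) * f (j, st j))"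
    unfolding xs0_def by (rule sum_list_concat_replicate)
  have xs0_len: "length xs0 = (\<Sum>j<s. v j)"
    unfolding xs0_def by (simp add: length_concat sum_list_upt_sum o_def)
  have Etot: "(\<Sum>j<s. E j) = real (length es)"
    unfolding E_def using E_total[of es s] esok by fastforce
  have "(\<Sum>j<s. real (v j) * st j) = (\<Sum>j<s. d - E j - real (v j))"
    using vpos by (intro sum.cong) (auto simp: st_def field_simps)
  also have "\<dots> = real s * d - real (length es) - real (\<Sum>j<s. v j)"
    by (simp add: sum_subtractf Etot)
  also have "\<dots> = 0"
  proof -
    have "real m = real (\<Sum>j<s. v j) + real (length es)" using arg_cong[OF cnt, of real] by simp
    then show ?thesis using s0 unfolding d_def by simp
  qed
  finally have sum0: "0 + sum_list (map snd xs0) = 0" using xs0_sum[of snd] by simp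
  have win: "\<forall>r\<in>set xs0. -A \<le> snd r \<and> snd r \<le> B" using xs0_set steps unfolding st_def by auto
  obtain ys where ys: "length ys = length xs0" "set ys \<subseteq> set xs0"
      "\<forall>f::(nat \<times> real) \<Rightarrow> real. sum_list (map f ys) = sum_list (map f xs0)"
      "\<forall>k\<le>length ys. -A \<le> 0 + sum_list (take k (map snd ys)) \<and> 0 + sum_list (take k (map snd ys)) \<le> B"
    using balance[OF AB(1,2) sum0 win] AB by auto
  define V where "V = length ys"
  have V0: "V > 0"
  proof -
    have "v 0 > 0" using vpos s0 by auto
    moreover have "v 0 \<le> (\<Sum>j<s. v j)" using s0 by (intro member_le_sum) auto
    ultimately have "(\<Sum>j<s. v j) > 0" by linarith
    then show ?thesis unfolding V_def ys(1) xs0_len by simp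
  qed
  have Vm: "V + length es = m" unfolding V_def ys(1) xs0_len using cnt by simp
  define Sp where "Sp k = sum_list (take k (map snd ys))" for k
  have Sp_win: "-A \<le> Sp k \<and> Sp k \<le> B" if "k \<le> V" for k using ys(4) that unfolding Sp_def V_def by auto
  have SpV: "Sp V = 0" unfolding Sp_def V_def using ys(3) sum0 by simp
  have Sp0: "Sp 0 = 0" unfolding Sp_def by simp
  have Sp_step: "Sp (Suc k) = Sp k + snd (ys ! k)" if "k < V" for k
    using that unfolding Sp_def V_def by (simp add: take_Suc_conv_app_nth)
  define c where "c = (B - A) / 2"
  define lab where "lab k = fst (ys ! k)" for k
  have lab_s: "lab k < s" if "k < V" for k
  proof -
    have "ys ! k \<in> set ys" using that unfolding V_def by simp
    then show ?thesis using ys(2) xs0_set unfolding lab_def by auto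
  qed
  define cyc where "cyc = concat (map (\<lambda>k. [(k, lab k, 1/2 + Sp (Suc k) - c), (k, lab (Suc k mod V), 1/2 - Sp (Suc k) + c)]) [0..<V])"
  define ext where "ext = concat (map (\<lambda>i. case es ! i of (a, b, p) \<Rightarrow> [(V + i, a, p), (V + i, b, 1 - p)]) [0..<length es])"
  define P where "P = cyc @ ext"
  have piece_lo: "1/2 + Sp k - c > 1/3" "1/2 - Sp k + c > 1/3" if "k \<le> V" for k
    using Sp_win[OF that] AB unfolding c_def by (auto simp: field_simps)
  have Pok: "\<forall>(i,j,x)\<in>set P. i < m \<and> j < s \<and> x > 1/3"
  proof -
    have "\<forall>(i,j,x)\<in>set cyc. i < m \<and> j < s \<and> x > 1/3"
    proof -
      { fix i j x assume "(i,j,x) \<in> set cyc"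
        then have "(i,j,x) \<in> (\<Union>k\<in>{0..<V}. set [(k, lab k, 1/2 + Sp (Suc k) - c), (k, lab (Suc k mod V), 1/2 - Sp (Suc k) + c)])"
          by (simp only: cyc_def set_concat set_map set_upt image_image)
        then obtain k where k0: "k \<in> {0..<V}" and mem: "(i,j,x) \<in> set [(k, lab k, 1/2 + Sp (Suc k) - c), (k, lab (Suc k mod V), 1/2 - Sp (Suc k) + c)]"
          by blast
        have k: "k < V" using k0 by simp
        have k2: "Suc k mod V < V" using V0 by simp
        have "Suc k \<le> V" using k by simp
        note pl = piece_lo[OF this]
        have "i = k" "j = lab k \<and> x = 1/2 + Sp (Suc k) - c \<or> j = lab (Suc k mod V) \<and> x = 1/2 - Sp (Suc k) + c"
          using mem by auto
        then have "i < m \<and> j < s \<and> x > 1/3" using lab_s[OF k] lab_s[OF k2] pl k Vm by auto }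
      then show ?thesis by auto
    qed
    moreover have "\<forall>(i,j,x)\<in>set ext. i < m \<and> j < s \<and> x > 1/3"
    proof -
      { fix i j x assume "(i,j,x) \<in> set ext"
        then have "(i,j,x) \<in> (\<Union>k\<in>{0..<length es}. set (case es ! k of (a, b, p) \<Rightarrow> [(V + k, a, p), (V + k, b, 1 - p)]))"
          by (simp only: ext_def set_concat set_map set_upt image_image)
        then obtain k where k0: "k \<in> {0..<length es}" and mem: "(i, j, x) \<in> set (case es ! k of (a, b, p) \<Rightarrow> [(V + k, a, p), (V + k, b, 1 - p)])"
          by blast
        have k: "k < length es" using k0 by simp
        obtain a b p where e: "es ! k = (a,b,p)" by (cases "es ! k") auto
        have "(a,b,p) \<in> set es" using nth_mem[OF k] e by simp
        then have "a < s \<and> b < s \<and> 1/3 < p \<and> p < 2/3" using esok by auto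
        then have "i < m \<and> j < s \<and> 1/3 < x" using mem e k Vm by auto }
      then show ?thesis by auto
    qed
    ultimately show ?thesis unfolding P_def by auto
  qed
  have muff: "sum_list (map (\<lambda>(i', j, x). x) (filter (\<lambda>(i', j, x). i' = i) P)) = 1" if "i < m" for i
  proof -
    have c1: "sum_list (map (\<lambda>(i', j, x). x) (filter (\<lambda>(i', j, x). i' = i) cyc)) = (\<Sum>k<V. if k = i then 1 else 0)"
      unfolding cyc_def sum_filter_concat sum_list_upt_sum by (intro sum.cong) auto
    have c2: "sum_list (map (\<lambda>(i', j, x). x) (filter (\<lambda>(i', j, x). i' = i) ext)) = (\<Sum>k<length es. if V + k = i then 1 else 0)"
      unfolding ext_def sum_filter_concat sum_list_upt_sum
      by (intro sum.cong) (auto split: prod.splits)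
    show ?thesis
    proof (cases "i < V")
      case True
      then have "(\<Sum>k<length es. if V + k = i then 1 else 0) = (0::real)" by (intro sum.neutral) auto
      then show ?thesis using c1 c2 True unfolding P_def by simp
    next
      case False
      then have "(\<Sum>k<V. if k = i then 1 else 0) = (0::real)" by (intro sum.neutral) auto
      moreover have "(\<Sum>k<length es. if V + k = i then 1 else 0) = (\<Sum>k<length es. if k = i - V then 1 else (0::real))"
        using False by (intro sum.cong) auto
      moreover have "i - V < length es" using False that Vm by linarith
      ultimately show ?thesis using c1 c2 unfolding P_def by simp
    qed
  qed
  have stud: "sum_list (map (\<lambda>(i, j', x). x) (filter (\<lambda>(i, j', x). j' = j) P)) = d" if "j < s" for j
  proof -
    define h where "h k = (if lab k = j then 1/2 - Sp k + c else 0)" for k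
    have c1: "sum_list (map (\<lambda>(i, j', x). x) (filter (\<lambda>(i, j', x). j' = j) cyc))
        = (\<Sum>k<V. (if lab k = j then 1/2 + Sp (Suc k) - c else 0) + h (Suc k mod V))"
    proof -
      have "sum_list (map (\<lambda>(i, j', x). x) (filter (\<lambda>(i, j', x). j' = j) cyc))
        = (\<Sum>k<V. (if lab k = j then 1/2 + Sp (Suc k) - c else 0) + (if lab (Suc k mod V) = j then 1/2 - Sp (Suc k) + c else 0))"
        unfolding cyc_def sum_filter_concat sum_list_upt_sum by (intro sum.cong) auto
      also have "\<dots> = (\<Sum>k<V. (if lab k = j then 1/2 + Sp (Suc k) - c else 0) + h (Suc k mod V))"
      proof (intro sum.cong refl)
        fix k assume "k \<in> {..<V}"
        then have "Sp (Suc k) = Sp (Suc k mod V)"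
          using SpV Sp0 by (cases "Suc k = V") auto
        then show "(if lab k = j then 1/2 + Sp (Suc k) - c else 0) + (if lab (Suc k mod V) = j then 1/2 - Sp (Suc k) + c else 0)
          = (if lab k = j then 1/2 + Sp (Suc k) - c else 0) + h (Suc k mod V)" unfolding h_def by simp
      qed
      finally show ?thesis .
    qed
    also have "\<dots> = (\<Sum>k<V. if lab k = j then 1/2 + Sp (Suc k) - c else 0) + (\<Sum>k<V. h k)"
      by (simp add: sum.distrib rotate_sum[OF V0])
    also have "\<dots> = (\<Sum>k<V. if lab k = j then 1 + snd (ys ! k) else 0)"
      unfolding h_def sum.distrib[symmetric] by (intro sum.cong) (auto simp: Sp_step)
    also have "\<dots> = sum_list (map (\<lambda>r. if fst r = j then 1 + snd r else 0) ys)"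
      unfolding sum_list_sum_nth V_def lab_def by (simp add: atLeast0LessThan)
    also have "\<dots> = sum_list (map (\<lambda>r. if fst r = j then 1 + snd r else 0) xs0)" using ys(3) by simp
    also have "\<dots> = (\<Sum>j'<s. real (v j') * (if j' = j then 1 + st j' else 0))"
      using xs0_sum[of "\<lambda>r. if fst r = j then 1 + snd r else 0"] by (simp only: snd_conv fst_conv)
    also have "\<dots> = real (v j) * (1 + st j)"
    proof -
      have "(\<Sum>j'<s. real (v j') * (if j' = j then 1 + st j' else 0)) = (\<Sum>j'<s. if j' = j then real (v j') * (1 + st j') else 0)"
        by (intro sum.cong) auto
      then show ?thesis using that by simp
    qed
    also have "\<dots> = d - E j" using vpos that unfolding st_def by (simp add: field_simps)
    finally have C: "sum_list (map (\<lambda>(i, j', x). x) (filter (\<lambda>(i, j', x). j' = j) cyc)) = d - E j" .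
    have X: "sum_list (map (\<lambda>(i, j', x). x) (filter (\<lambda>(i, j', x). j' = j) ext)) = E j"
    proof -
      have "sum_list (map (\<lambda>(i, j', x). x) (filter (\<lambda>(i, j', x). j' = j) ext))
         = (\<Sum>k<length es. (\<lambda>(a,b,p). (if a = j then p else 0) + (if b = j then 1 - p else 0)) (es ! k))"
        unfolding ext_def sum_filter_concat sum_list_upt_sum
        by (intro sum.cong) (auto split: prod.splits)
      also have "\<dots> = E j" unfolding E_def sum_list_sum_nth by (simp add: atLeast0LessThan)
      finally show ?thesis .
    qed
    show ?thesis using C X unfolding P_def by simp
  qed
  have "muffin_procedure m s P"
    unfolding muffin_procedure_def
  proof (intro conjI allI impI)
    show "\<forall>(i, j, x)\<in>set P. i < m \<and> j < s \<and> 0 < x"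
    proof
      fix e assume "e \<in> set P"
      then show "case e of (i, j, x) \<Rightarrow> i < m \<and> j < s \<and> 0 < x" using Pok by fastforce
    qed
  next
    fix i assume "i < m" then show "sum_list (map (\<lambda>(i', j, x). x) (filter (\<lambda>(i', j, x). i' = i) P)) = 1" by (rule muff)
  next
    fix j assume "j < s" then show "sum_list (map (\<lambda>(i, j', x). x) (filter (\<lambda>(i, j', x). j' = j) P)) = real m / real s"
      using stud unfolding d_def by simp
  qed
  moreover have "(0, lab 0, 1/2 + Sp (Suc 0) - c) \<in> set P" unfolding P_def cyc_def using V0 by auto
  then have "P \<noteq> []" by auto
  ultimately show ?thesis using Pok by blast
qed



lemma smallest_le_one:
  assumes "m > 0" "muffin_procedure m s Q"
  shows "smallest_piece Q \<le> 1"
proof -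
  let ?L = "filter (\<lambda>(i', j, x). i' = 0) Q"
  have s1: "sum_list (map (\<lambda>(i', j, x). x) ?L) = 1" using assms unfolding muffin_procedure_def by blast
  have pos: "\<forall>(i, j, x)\<in>set Q. i < m \<and> j < s \<and> x > 0" using assms(2) unfolding muffin_procedure_def by blast
  have "?L \<noteq> []" using s1 by auto
  then obtain e where e: "e \<in> set ?L" by (cases ?L) auto
  obtain i j x where ex: "e = (i, j, x)" by (cases e) auto
  have xin: "x \<in> set (map (\<lambda>(i', j, x). x) ?L)" using e ex by force
  have "\<And>y. y \<in> set (map (\<lambda>(i', j, x). x) ?L) \<Longrightarrow> 0 \<le> y" using pos by fastforce
  then have "x \<le> 1" using member_le_sum_list[OF xin] s1 by simp
  moreover have "smallest_piece Q \<le> x"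
    unfolding smallest_piece_def using e ex by (intro Min_le) force+
  ultimately show ?thesis by simp
qed

lemma f_gt:
  assumes "m > 0" "muffin_procedure m s P" "\<forall>(i,j,x)\<in>set P. x > 1/3" "P \<noteq> []"
  shows "muffin_f m s > 1/3"
proof -
  have "smallest_piece P > 1/3"
    unfolding smallest_piece_def using assms(3,4) by (subst Min_gr_iff) auto
  moreover have "smallest_piece P \<le> muffin_f m s"
    unfolding muffin_f_def
  proof (rule cSup_upper)
    show "smallest_piece P \<in> {smallest_piece P |P. muffin_procedure m s P}" using assms(2) by blast
    show "bdd_above {smallest_piece P |P. muffin_procedure m s P}"
      using smallest_le_one[OF assms(1)] by (intro bdd_aboveI[of _ 1]) blast
  qed
  ultimately show ?thesis by simp
qed



lemma delta_sum: "(\<Sum>i<n. if g + i = j then (x::real) else 0) = (if g \<le> j \<and> j < g + (n::nat) then x else 0)"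
  by (induction n) auto

lemma delta_sum0: "(\<Sum>i<n. if i = j then (x::real) else 0) = (if j < (n::nat) then x else 0)"
  using delta_sum[where g=0] by simp

lemma sum_split_at:
  assumes "c \<le> (s::nat)"
  shows "(\<Sum>j<s. f j) = (\<Sum>j<c. f j) + (\<Sum>j\<in>{c..<s}. (f j :: 'a::comm_monoid_add))"
proof -
  have eq: "{..<s} = {..<c} \<union> {c..<s}" using assms by auto
  have "(\<Sum>j<s. f j) = sum f ({..<c} \<union> {c..<s})" by (simp only: eq)
  also have "\<dots> = sum f {..<c} + sum f {c..<s}" by (rule sum.union_disjoint) auto
  finally show ?thesis .
qed

lemma R2_case:
  fixes m s :: nat
  assumes s0: "s > 0" and h1: "5*s \<le> 3*m" and h2: "m < 2*s"
  shows "\<exists>P. muffin_procedure m s P \<and> (\<forall>(i,j,x)\<in>set P. x > 1/3) \<and> P \<noteq> []"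
proof -
  define n1 where "n1 = 2*s - m"
  define n2 where "n2 = 3*m - 5*s"
  have sN: "s = 3*n1 + n2" and mN: "m = 5*n1 + 2*n2" using h1 h2 unfolding n1_def n2_def by linarith+
  define d where "d = real m / real s"
  have ds: "d * real s = real m" unfolding d_def using s0 by simp
  have dlo: "d \<ge> 5/3"
  proof -
    have "5 * real s \<le> 3 * real m" using h1 by linarith
    then show ?thesis unfolding d_def using s0 by (simp add: field_simps)
  qed
  have dhi: "d < 2"
  proof -
    have "real m < 2 * real s" using h2 by linarith
    then show ?thesis unfolding d_def using s0 by (simp add: field_simps)
  qed
  define p where "p = (2 + d) / 6"
  define v where "v j = (if j < 3*n1 then 1 else (2::nat))" for j
  define es where "es = map (\<lambda>i. (i, 2*n1 + i, p)) [0..<n1] @ map (\<lambda>i. (n1 + i, 2*n1 + i, p)) [0..<n1]"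
  define E where "E = (\<lambda>j. sum_list (map (\<lambda>(a,b,p). (if a = j then p else 0) + (if b = j then 1 - p else 0)) es))"
  have Ej: "E j = (if j < 2*n1 then p else 0) + (if 2*n1 \<le> j \<and> j < 3*n1 then 2*(1-p) else 0)" for j
  proof -
    have "E j = (\<Sum>i<n1. (if i = j then p else 0) + (if 2*n1 + i = j then 1 - p else 0))
              + (\<Sum>i<n1. (if n1 + i = j then p else 0) + (if 2*n1 + i = j then 1 - p else 0))"
      unfolding E_def es_def by (simp add: sum_list_upt_sum)
    also have "\<dots> = (if j < n1 then p else 0) + (if 2*n1 \<le> j \<and> j < 2*n1 + n1 then 1 - p else 0)
         + ((if n1 \<le> j \<and> j < n1 + n1 then p else 0) + (if 2*n1 \<le> j \<and> j < 2*n1 + n1 then 1 - p else 0))"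
      by (simp only: sum.distrib delta_sum delta_sum0)
    also have "\<dots> = (if j < 2*n1 then p else 0) + (if 2*n1 \<le> j \<and> j < 3*n1 then 2*(1-p) else 0)"
      by auto
    finally show ?thesis .
  qed
  have cnt: "(\<Sum>j<s. v j) + length es = m"
  proof -
    have "(\<Sum>j<s. v j) = (\<Sum>j<3*n1. v j) + (\<Sum>j\<in>{3*n1..<s}. v j)" using sN by (intro sum_split_at) simp
    also have "(\<Sum>j<3*n1. v j) = 3*n1" unfolding v_def by simp
    also have "(\<Sum>j\<in>{3*n1..<s}. v j) = (\<Sum>j\<in>{3*n1..<s}. 2)" unfolding v_def by (intro sum.cong) auto
    also have "\<dots> = 2 * n2" using sN by simp
    finally show ?thesis unfolding es_def using mN by simp
  qed
  have esok: "\<forall>(a,b,q)\<in>set es. a < s \<and> b < s \<and> 1/3 < q \<and> q < 2/3"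
    unfolding es_def p_def using sN dlo dhi by auto
  define A where "A = 1 - d/2"
  define B where "B = (5*d - 8)/6"
  have ABs: "A + B = (d - 1)/3" unfolding A_def B_def by (simp add: field_simps)
  have AB: "A \<ge> 0" "B \<ge> 0" "A + B < 1/3" unfolding ABs using dlo dhi by (auto simp: A_def B_def)
  have steps: "\<forall>j<s. -A \<le> (d - E j) / v j - 1 \<and> (d - E j) / v j - 1 \<le> B"
  proof (intro allI impI)
    fix j assume "j < s"
    consider "j < 2*n1" | "2*n1 \<le> j \<and> j < 3*n1" | "3*n1 \<le> j" by linarith
    then show "-A \<le> (d - E j) / v j - 1 \<and> (d - E j) / v j - 1 \<le> B"
    proof cases
      case 1
      then have "E j = p" "v j = 1" unfolding Ej v_def by auto
      then show ?thesis unfolding A_def B_def p_def using dlo dhi by (auto simp: field_simps)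
    next
      case 2
      then have "E j = 2*(1-p)" "v j = 1" unfolding Ej v_def by auto
      then show ?thesis unfolding A_def B_def p_def using dlo dhi by (auto simp: field_simps)
    next
      case 3
      then have "E j = 0" "v j = 2" unfolding Ej v_def by auto
      then show ?thesis unfolding A_def B_def p_def using dlo dhi by (auto simp: field_simps)
    qed
  qed
  have vpos: "\<forall>j<s. v j > 0" by (simp add: v_def)
  show ?thesis
    by (rule general[OF s0 vpos cnt esok AB steps[unfolded E_def d_def]])
qed



lemma K_case:
  fixes m s :: nat
  assumes s0: "s > 0" and k3: "3 \<le> 2*m div s" and notR2: "\<not> (5*s \<le> 3*m \<and> m < 2*s)"
  shows "\<exists>P. muffin_procedure m s P \<and> (\<forall>(i,j,x)\<in>set P. x > 1/3) \<and> P \<noteq> []"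
proof -
  define k where "k = 2*m div s"
  have klo: "k * s \<le> 2*m" unfolding k_def by (simp add: div_times_less_eq_dividend)
  have khi: "2*m < (k+1) * s"
  proof -
    have "2*m = k * s + 2*m mod s" unfolding k_def by simp
    moreover have "2*m mod s < s" using s0 by simp
    ultimately show ?thesis by simp
  qed
  have k3': "k \<ge> 3" using k3 unfolding k_def by simp
  define a where "a = (k+1)*s - 2*m"
  define b where "b = 2*m - k*s"
  have ab: "a + b = s" unfolding a_def b_def using klo khi by (simp add: algebra_simps)
  have kab: "k*a + (k+1)*b = 2*m"
  proof -
    have "k*a + (k+1)*b = k*(a+b) + b" by (simp add: algebra_simps)
    also have "\<dots> = k*s + b" using ab by simp
    also have "\<dots> = 2*m" unfolding b_def using klo by simp
    finally show ?thesis .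
  qed
  define c where "c = (if odd k then a else b)"
  define to where "to = (if odd k then k else k+1)"
  define te where "te = (if odd k then k+1 else k)"
  have cs: "c \<le> s" unfolding c_def using ab by auto
  have cto: "c * to + (s - c) * te = 2*m" unfolding c_def to_def te_def using ab kab
    by (auto simp: algebra_simps)
  have oddto: "odd to" and evte: "even te" unfolding to_def te_def by auto
  have evc: "even c"
  proof (cases "odd k")
    case True
    then have "even (k+1)" by simp
    then have "even ((k+1)*s)" by simp
    moreover have "even (2*m)" by simp
    ultimately show ?thesis using True unfolding c_def a_def by (simp add: even_diff_nat)
  next
    case False
    then have "even (k*s)" by simp
    then show ?thesis using False unfolding c_def b_def by (simp add: even_diff_nat)
  qed
  define t where "t j = (if j < c then to else te)" for j
  define v where "v j = t j div 2" for j
  define h where "h = c div 2"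
  have ch: "c = 2*h" unfolding h_def using evc by simp
  define es where "es = map (\<lambda>i. (i, h + i, 1/2::real)) [0..<h]"
  define E where "E = (\<lambda>j. sum_list (map (\<lambda>(a,b,p). (if a = j then p else 0) + (if b = j then 1 - p else 0)) es))"
  have Ej: "E j = (if j < c then 1/2 else 0)" for j
  proof -
    have "E j = (\<Sum>i<h. (if i = j then 1/2 else 0) + (if h + i = j then 1 - 1/2 else 0))"
      unfolding E_def es_def by (simp add: sum_list_upt_sum)
    also have "\<dots> = (if j < h then 1/2 else 0) + (if h \<le> j \<and> j < h + h then 1 - 1/2 else 0)"
      by (simp only: sum.distrib delta_sum delta_sum0)
    also have "\<dots> = (if j < c then 1/2 else 0)" unfolding ch by auto
    finally show ?thesis .
  qed
  have tk: "t j = k \<or> t j = k+1" for j unfolding t_def to_def te_def by auto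
  have t_odd: "odd (t j) \<longleftrightarrow> j < c" for j unfolding t_def using oddto evte by auto
  have vpos: "\<forall>j<s. v j > 0"
  proof (intro allI impI)
    fix j
    have "t j \<ge> 2" using tk[of j] k3' by auto
    then show "v j > 0" unfolding v_def by simp
  qed
  have cnt: "(\<Sum>j<s. v j) + length es = m"
  proof -
    have "(\<Sum>j<s. t j) = (\<Sum>j<c. t j) + (\<Sum>j\<in>{c..<s}. t j)" using cs by (rule sum_split_at)
    also have "(\<Sum>j<c. t j) = c * to" unfolding t_def by simp
    also have "(\<Sum>j\<in>{c..<s}. t j) = (\<Sum>j\<in>{c..<s}. te)" unfolding t_def by (intro sum.cong) auto
    also have "\<dots> = (s - c) * te" by simp
    finally have st: "(\<Sum>j<s. t j) = 2*m" using cto by simp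
    have "(\<Sum>j<s. (if odd (t j) then 1 else 0)) = (\<Sum>j<s. (if j < c then 1 else (0::nat)))"
      using t_odd by (intro sum.cong) auto
    also have "\<dots> = (\<Sum>j<c. (if j < c then 1 else (0::nat))) + (\<Sum>j\<in>{c..<s}. (if j < c then 1 else (0::nat)))"
      using cs by (rule sum_split_at)
    also have "\<dots> = c" by simp
    finally have so: "(\<Sum>j<s. (if odd (t j) then 1 else 0)) = c" .
    have "(\<Sum>j<s. t j) = (\<Sum>j<s. 2 * v j + (if odd (t j) then 1 else 0))"
      unfolding v_def by (intro sum.cong) auto
    also have "\<dots> = 2 * (\<Sum>j<s. v j) + c" by (simp add: sum.distrib sum_distrib_left so)
    finally have "2 * (\<Sum>j<s. v j) + c = 2 * m" using st by simp
    then show ?thesis unfolding es_def using ch by simp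
  qed
  have esok: "\<forall>(a,b,q)\<in>set es. a < s \<and> b < s \<and> 1/3 < q \<and> q < 2/3"
    unfolding es_def using cs ch by auto
  define d where "d = real m / real s"
  have dlo: "real k / 2 \<le> d"
  proof -
    have "real (k * s) \<le> real (2 * m)" using klo by (simp only: of_nat_le_iff)
    then have "real k * real s \<le> 2 * real m" by simp
    then show ?thesis unfolding d_def using s0 by (simp add: field_simps)
  qed
  have dhi: "d < (real k + 1) / 2"
  proof -
    have "real (2 * m) < real ((k + 1) * s)" using khi by (simp only: of_nat_less_iff)
    then have "2 * real m < (real k + 1) * real s" by (simp add: algebra_simps)
    then show ?thesis unfolding d_def using s0 by (simp add: field_simps)
  qed
  define A where "A = ((real k + 1)/2 - d) / real ((k+1) div 2)"
  define B where "B = (d - real k/2) / real (k div 2)"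
  have kd2: "k div 2 \<ge> 1" "(k+1) div 2 \<ge> 1" using k3' by linarith+
  have AB0: "A \<ge> 0" "B \<ge> 0" unfolding A_def B_def using dlo dhi kd2 by auto
  have ABlt: "A + B < 1/3"
  proof (cases "k = 3")
    case True
    then have "m < 2*s" using khi by simp
    then have "3*m < 5*s" using notR2 by linarith
    then have "real (3 * m) < real (5 * s)" by (simp only: of_nat_less_iff)
    then have "3 * real m < 5 * real s" by simp
    then have "d < 5/3" unfolding d_def using s0 by (simp add: field_simps)
    then show ?thesis unfolding A_def B_def using True by (simp add: field_simps)
  next
    case False
    then have "k \<ge> 4" using k3' by simp
    then have "k div 2 \<ge> 2" "(k+1) div 2 \<ge> 2" by linarith+
    then have k2: "real (k div 2) \<ge> 2" "real ((k+1) div 2) \<ge> 2" by simp_all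
    have "A \<le> ((real k + 1)/2 - d) / 2" unfolding A_def using k2 dhi by (intro divide_left_mono) auto
    moreover have "B \<le> (d - real k/2) / 2" unfolding B_def using k2 dlo by (intro divide_left_mono) auto
    ultimately show ?thesis by (simp add: field_simps)
  qed
  have steps: "\<forall>j<s. -A \<le> (d - E j) / v j - 1 \<and> (d - E j) / v j - 1 \<le> B"
  proof (intro allI impI)
    fix j assume "j < s"
    have vE: "real (v j) + E j = real (t j) / 2"
    proof -
      have "t j = 2 * v j + (if odd (t j) then 1 else 0)" unfolding v_def by auto
      then have "real (t j) = real (2 * v j + (if odd (t j) then 1 else 0))" by (rule arg_cong)
      then have "real (t j) = 2 * real (v j) + (if odd (t j) then 1 else 0)" by simp
      then show ?thesis unfolding Ej t_odd[symmetric] by auto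
    qed
    have vp: "real (v j) > 0" using vpos \<open>j < s\<close> by simp
    have st: "(d - E j) / v j - 1 = (d - real (t j) / 2) / v j"
      using vE vp by (simp add: field_simps)
    from tk[of j] show "-A \<le> (d - E j) / v j - 1 \<and> (d - E j) / v j - 1 \<le> B"
    proof
      assume tj: "t j = k"
      then have "v j = k div 2" unfolding v_def by simp
      then have "(d - E j) / v j - 1 = B" unfolding st B_def using tj by simp
      then show ?thesis using AB0 by simp
    next
      assume tj: "t j = k+1"
      then have "v j = (k+1) div 2" unfolding v_def by simp
      then have "(d - E j) / v j - 1 = - A" unfolding st A_def using tj kd2 by (simp add: field_simps)
      then show ?thesis using AB0 by simp
    qed
  qed
  show ?thesis
    by (rule general[OF s0 vpos cnt esok AB0 ABlt steps[unfolded E_def d_def]])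
qed


theorem theorem12:
  fixes m s :: nat
  assumes "m > 0" and "s > 0"
    and "\<lfloor>2 * real m / real s\<rfloor> \<ge> 3"
  shows "muffin_f m s > 1 / 3"
proof -
  have "\<lfloor>real (2 * m) / real s\<rfloor> \<ge> 3" using assms(3) by simp
  then have "int (2 * m div s) \<ge> 3" by (simp only: floor_divide_of_nat_eq)
  then have k3: "3 \<le> 2 * m div s" by simp
  have "\<exists>P. muffin_procedure m s P \<and> (\<forall>(i,j,x)\<in>set P. x > 1/3) \<and> P \<noteq> []"
  proof (cases "5*s \<le> 3*m \<and> m < 2*s")
    case True
    then show ?thesis using R2_case[OF assms(2)] by blast
  next
    case False
    then show ?thesis using K_case[OF assms(2) k3] by blast
  qed
  then obtain P where "muffin_procedure m s P" "\<forall>(i,j,x)\<in>set P. x > 1/3" "P \<noteq> []" by blast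
  then show ?thesis using f_gt[OF assms(1)] by blast
qed

end
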